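(* For every integer $k\ge2$, $$\max_{n\ge1}\frac{\log{\mathfrak t}_k(n)}{n}=\frac12\log\binom{k+1}{2}.$$
   Context: For a positive integer $n$, ${\mathfrak t}_k(n)$ is the number of ordered $k$-tuples $({\mathfrak d}_1,\dots,{\mathfrak d}_k)$ of nonzero Gaussian integers, each taken up to associates (multiplication by $\pm1,\pm i$), such that ${\mathfrak d}_1\cdots{\mathfrak d}_k$ is associated to $n$; equivalently, the number of ordered $k$-tuples of ideals of $\mathbb{Z}[i]$ whose product is $n\mathbb{Z}[i]$. *)

theory Defs
  imports Complex_Main
begin

definition gauss_int :: "complex \<Rightarrow> bool" where
  "gauss_int z \<longleftrightarrow> Re z \<in> \<int> \<and> Im z \<in> \<int>"

definition gassoc :: "complex \<Rightarrow> complex \<Rightarrow> bool" where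
  "gassoc a b \<longleftrightarrow> (\<exists>u \<in> {1, -1, \<i>, -\<i>}. b = u * a)"

definition gtuples :: "nat \<Rightarrow> nat \<Rightarrow> complex list set" where
  "gtuples k n = {ds. length ds = k \<and> (\<forall>d \<in> set ds. gauss_int d \<and> d \<noteq> 0)
                      \<and> gassoc (prod_list ds) (of_nat n)}"

definition gtuple_rel :: "nat \<Rightarrow> nat \<Rightarrow> (complex list \<times> complex list) set" where
  "gtuple_rel k n = {(ds, es). ds \<in> gtuples k n \<and> es \<in> gtuples k n \<and> list_all2 gassoc ds es}"

definition gt :: "nat \<Rightarrow> nat \<Rightarrow> nat" where
  "gt k n = card (gtuples k n // gtuple_rel k n)"

end

theory Submission
  imports Defs
begin


lemma gauss_intI: "Re z \<in> \<int> \<Longrightarrow> Im z \<in> \<int> \<Longrightarrow> gauss_int z"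
  by (simp add: gauss_int_def)

lemma gauss_add[intro]: "gauss_int a \<Longrightarrow> gauss_int b \<Longrightarrow> gauss_int (a + b)"
  by (simp add: gauss_int_def)
lemma gauss_diff[intro]: "gauss_int a \<Longrightarrow> gauss_int b \<Longrightarrow> gauss_int (a - b)"
  by (simp add: gauss_int_def)
lemma gauss_minus[intro]: "gauss_int a \<Longrightarrow> gauss_int (- a)"
  by (simp add: gauss_int_def)
lemma gauss_mult[intro]: "gauss_int a \<Longrightarrow> gauss_int b \<Longrightarrow> gauss_int (a * b)"
  by (simp add: gauss_int_def)
lemma gauss_0[intro,simp]: "gauss_int 0" and gauss_1[intro,simp]: "gauss_int 1"
  and gauss_i[intro,simp]: "gauss_int \<i>" and gauss_of_nat[intro,simp]: "gauss_int (of_nat n)"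
  by (auto simp: gauss_int_def)
lemma gauss_power[intro]: "gauss_int a \<Longrightarrow> gauss_int (a ^ n)"
  by (induction n) auto
lemma gauss_prod_list[intro]: "(\<forall>d\<in>set ds. gauss_int d) \<Longrightarrow> gauss_int (prod_list ds)"
  by (induction ds) auto

definition gn :: "complex \<Rightarrow> nat" where "gn z = nat \<lfloor>(cmod z)^2\<rfloor>"

lemma gauss_int_obtain:
  assumes "gauss_int z" obtains a b :: int where "z = Complex (of_int a) (of_int b)"
  using assms unfolding gauss_int_def
  by (metis Ints_cases complex_surj)

lemma gn_real: assumes "gauss_int z" shows "real (gn z) = (cmod z)^2"
proof -
  obtain a b :: int where z: "z = Complex (of_int a) (of_int b)" using assms gauss_int_obtain by blast
  have "(cmod z)^2 = of_int (a^2 + b^2)" unfolding z cmod_power2 by simp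
  moreover have "a^2 + b^2 \<ge> 0" by simp
  ultimately show ?thesis unfolding gn_def by simp
qed

lemma gn_int: assumes "gauss_int z" shows "gn z = nat ((\<lfloor>Re z\<rfloor>)^2 + (\<lfloor>Im z\<rfloor>)^2)"
proof -
  obtain a b :: int where z: "z = Complex (of_int a) (of_int b)" using assms gauss_int_obtain by blast
  have "(cmod z)^2 = of_int (a^2 + b^2)" unfolding z cmod_power2 by simp
  moreover have "\<lfloor>(real_of_int a)^2\<rfloor> = a^2" "\<lfloor>(real_of_int b)^2\<rfloor> = b^2"
    by (metis floor_of_int of_int_power)+
  ultimately show ?thesis unfolding gn_def z by simp
qed

lemma gn_mult: "gauss_int a \<Longrightarrow> gauss_int b \<Longrightarrow> gn (a * b) = gn a * gn b"
proof -
  assume a: "gauss_int a" and b: "gauss_int b"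
  have "real (gn (a*b)) = real (gn a * gn b)"
    using gn_real[OF a] gn_real[OF b] gn_real[OF gauss_mult[OF a b]]
    by (simp add: norm_mult power_mult_distrib)
  then show ?thesis by linarith
qed

lemma gn_power: assumes "gauss_int a" shows "gn (a ^ n) = gn a ^ n"
proof (induction n)
  case 0 show ?case by (simp add: gn_def)
next
  case (Suc n) thus ?case using assms by (simp add: gn_mult gauss_power)
qed

lemma gn_0_iff: "gauss_int z \<Longrightarrow> gn z = 0 \<longleftrightarrow> z = 0"
  using gn_real by fastforce

lemma gn_of_nat: "gn (of_nat m) = m^2"
proof -
  have "real (gn (of_nat m)) = real (m^2)" using gn_real[of "of_nat m"] by simp
  then show ?thesis by linarith
qed

lemma sq_sum_1: fixes a b :: int assumes "a^2 + b^2 = 1"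
  shows "(a = 1 \<or> a = -1) \<and> b = 0 \<or> a = 0 \<and> (b = 1 \<or> b = -1)"
proof -
  have "a^2 \<le> 1" "b^2 \<le> 1" using assms zero_le_power2[of a] zero_le_power2[of b] by linarith+
  then have "\<bar>a\<bar> \<le> 1" "\<bar>b\<bar> \<le> 1" using abs_le_square_iff[of a 1] abs_le_square_iff[of b 1] by auto
  then have "a \<in> {-1,0,1}" "b \<in> {-1,0,1}" by auto
  then show ?thesis using assms by auto
qed

lemma sq_sum_3: fixes a b :: int shows "a^2 + b^2 \<noteq> 3"
proof
  assume h: "a^2 + b^2 = 3"
  have "a^2 \<le> 3" "b^2 \<le> 3" using h by (smt (verit) zero_le_power2)+
  then have "\<bar>a\<bar>^2 < 2^2" "\<bar>b\<bar>^2 < 2^2" by simp_all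
  then have "\<bar>a\<bar> < 2" "\<bar>b\<bar> < 2" using power2_less_imp_less by fastforce+
  then have "\<bar>a\<bar> \<le> 1" "\<bar>b\<bar> \<le> 1" by simp_all
  then have "a^2 \<le> 1" "b^2 \<le> 1" using abs_le_square_iff[of a 1] abs_le_square_iff[of b 1] by auto
  then show False using h by linarith
qed

lemma gn_ne_3: assumes "gauss_int z" shows "gn z \<noteq> 3"
  using sq_sum_3[of "\<lfloor>Re z\<rfloor>" "\<lfloor>Im z\<rfloor>"] gn_int[OF assms] by (auto simp: nat_eq_iff)



definition gunit :: "complex \<Rightarrow> bool" where "gunit u \<longleftrightarrow> u \<in> {1, -1, \<i>, -\<i>}"

lemma gunit_gauss: "gunit u \<Longrightarrow> gauss_int u" by (auto simp: gunit_def)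
lemma gunit_nz: "gunit u \<Longrightarrow> u \<noteq> 0" by (auto simp: gunit_def)
lemma gunit_mult: "gunit u \<Longrightarrow> gunit v \<Longrightarrow> gunit (u * v)" by (auto simp: gunit_def)
lemma gunit_inv: "gunit u \<Longrightarrow> gunit (1 / u)" by (auto simp: gunit_def)
lemma gunit_div: "gunit u \<Longrightarrow> gunit v \<Longrightarrow> gunit (v / u)" by (auto simp: gunit_def)
lemma gunit_1[simp]: "gunit 1" and gunit_mi: "gunit (-\<i>)" by (auto simp: gunit_def)
lemma gunit_power: "gunit u \<Longrightarrow> gunit (u ^ n)" by (induction n) (auto intro: gunit_mult)
lemma gn_gunit: "gunit u \<Longrightarrow> gn u = 1" by (auto simp: gunit_def gn_def)

lemma gn_1_gunit: assumes "gauss_int z" "gn z = 1" shows "gunit z"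
proof -
  obtain a b :: int where z: "z = Complex (of_int a) (of_int b)" using assms gauss_int_obtain by blast
  have "a^2 + b^2 = 1" using gn_int[OF assms(1)] assms(2) unfolding z by (simp add: nat_eq_iff)
  from sq_sum_1[OF this] have "(a=1 \<or> a=-1) \<and> b=0 \<or> a=0 \<and> (b=1 \<or> b=-1)" .
  then show ?thesis by (elim disjE conjE) (auto simp: z gunit_def complex_eq_iff)
qed

lemma gunit_iff: "gauss_int z \<Longrightarrow> gunit z \<longleftrightarrow> gn z = 1"
  using gn_1_gunit gn_gunit by blast

lemma gassoc_iff: "gassoc a b \<longleftrightarrow> (\<exists>u. gunit u \<and> b = u * a)"
  unfolding gassoc_def gunit_def by blast

lemma gassoc_refl[simp]: "gassoc a a" by (auto simp: gassoc_iff intro: exI[of _ 1])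
lemma gassoc_sym: assumes "gassoc a b" shows "gassoc b a"
proof -
  obtain u where u: "gunit u" "b = u * a" using assms unfolding gassoc_iff by blast
  then have "a = (1/u) * b" using gunit_nz[OF u(1)] by simp
  then show ?thesis unfolding gassoc_iff using gunit_inv[OF u(1)] by blast
qed
lemma gassoc_trans: assumes "gassoc a b" "gassoc b c" shows "gassoc a c"
proof -
  obtain u where u: "gunit u" "b = u * a" using assms unfolding gassoc_iff by blast
  obtain v where v: "gunit v" "c = v * b" using assms unfolding gassoc_iff by blast
  have "c = (v*u) * a" using u v by simp
  then show ?thesis unfolding gassoc_iff using gunit_mult[OF v(1) u(1)] by blast
qed
lemma gassoc_gauss: "gassoc a b \<Longrightarrow> gauss_int a \<Longrightarrow> gauss_int b"
  unfolding gassoc_iff using gunit_gauss by blast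
lemma gassoc_nz: "gassoc a b \<Longrightarrow> a \<noteq> 0 \<Longrightarrow> b \<noteq> 0"
  unfolding gassoc_iff using gunit_nz by auto
lemma gassoc_gn: "gassoc a b \<Longrightarrow> gauss_int a \<Longrightarrow> gn b = gn a"
  unfolding gassoc_iff using gunit_gauss gn_gunit gn_mult by auto
lemma gassoc_mult_left: assumes "gassoc a b" shows "gassoc (c * a) (c * b)"
proof -
  obtain u where u: "gunit u" "b = u * a" using assms unfolding gassoc_iff by blast
  have "c * b = u * (c * a)" using u by (simp add: algebra_simps)
  then show ?thesis unfolding gassoc_iff using u by blast
qed
lemma gassoc_mult: assumes "gassoc a b" "gassoc c d" shows "gassoc (a * c) (b * d)"
proof -
  obtain u where u: "gunit u" "b = u * a" using assms unfolding gassoc_iff by blast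
  obtain v where v: "gunit v" "d = v * c" using assms unfolding gassoc_iff by blast
  have "b * d = (u*v) * (a * c)" using u v by (simp add: algebra_simps)
  then show ?thesis unfolding gassoc_iff using gunit_mult[OF u(1) v(1)] by blast
qed
lemma gassoc_unitI: "gunit u \<Longrightarrow> gassoc a (u * a)"
  unfolding gassoc_iff by blast
lemma gassoc_units: assumes "gunit u" "gunit v" shows "gassoc u v"
proof -
  have "v = (v/u) * u" using gunit_nz[OF assms(1)] by simp
  then show ?thesis unfolding gassoc_iff using gunit_div[OF assms] by blast
qed

lemma list_all2_gassoc_prod:
  "list_all2 gassoc xs ys \<Longrightarrow> gassoc (prod_list xs) (prod_list ys)"
proof (induction rule: list_all2_induct)
  case Nil show ?case by simp
next
  case (Cons x xs y ys) thus ?case using gassoc_mult[of x y "prod_list xs" "prod_list ys"] by simp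
qed

definition gdvd :: "complex \<Rightarrow> complex \<Rightarrow> bool" where
  "gdvd a b \<longleftrightarrow> (\<exists>c. gauss_int c \<and> b = a * c)"

lemma gdvd_mult_right: assumes "gdvd a b" "gauss_int c" shows "gdvd a (b * c)"
proof -
  obtain d where d: "gauss_int d" "b = a * d" using assms unfolding gdvd_def by blast
  have "b * c = a * (d * c)" using d by simp
  then show ?thesis unfolding gdvd_def using d assms(2) by blast
qed
lemma gdvd_mult_left: "gdvd a b \<Longrightarrow> gauss_int c \<Longrightarrow> gdvd a (c * b)"
  using gdvd_mult_right by (simp add: mult.commute)
lemma gdvd_add: assumes "gdvd a b" "gdvd a c" shows "gdvd a (b + c)"
proof -
  obtain d where d: "gauss_int d" "b = a * d" using assms unfolding gdvd_def by blast
  obtain e where e: "gauss_int e" "c = a * e" using assms unfolding gdvd_def by blast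
  have "b + c = a * (d + e)" using d e by (simp add: distrib_left)
  then show ?thesis unfolding gdvd_def using d e by blast
qed
lemma gdvd_refl: "gdvd a a" unfolding gdvd_def by (rule exI[of _ 1]) simp

definition gprime :: "complex \<Rightarrow> bool" where
  "gprime p \<longleftrightarrow> gauss_int p \<and> gn p > 1 \<and>
     (\<forall>a b. gauss_int a \<longrightarrow> gauss_int b \<longrightarrow> p = a * b \<longrightarrow> gunit a \<or> gunit b)"

lemma gprime_nz: "gprime p \<Longrightarrow> p \<noteq> 0"
  unfolding gprime_def by (auto simp: gn_def)

lemma gprime_not_dvd_1: assumes "gprime p" shows "\<not> gdvd p 1"
proof
  assume "gdvd p 1"
  then obtain c where c: "gauss_int c" "1 = p * c" unfolding gdvd_def by blast
  then have "gn p * gn c = 1" using gn_mult[of p c] assms unfolding gprime_def by (simp add: gn_def)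
  then show False using assms unfolding gprime_def by simp
qed



lemma gauss_divmod: assumes "gauss_int a" "gauss_int b" "b \<noteq> 0"
  shows "\<exists>q. gauss_int q \<and> gn (a - q * b) < gn b"
proof -
  define c where "c = a / b"
  define q where "q = Complex (of_int (round (Re c))) (of_int (round (Im c)))"
  have gq: "gauss_int q" by (simp add: q_def gauss_int_def)
  have h1: "\<bar>Re c - Re q\<bar> \<le> 1/2" "\<bar>Im c - Im q\<bar> \<le> 1/2"
    using of_int_round_abs_le[of "Re c"] of_int_round_abs_le[of "Im c"]
    by (simp_all add: q_def abs_minus_commute)
  have sq: "x^2 \<le> 1/4" if "\<bar>x\<bar> \<le> 1/2" for x :: real
  proof -
    have "\<bar>x\<bar>^2 \<le> (1/2)^2" using power_mono[OF that, of 2] by simp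
    then show ?thesis by (simp add: power2_eq_square)
  qed
  have "(cmod (c - q))^2 = (Re c - Re q)^2 + (Im c - Im q)^2" by (simp add: cmod_power2)
  also have "\<dots> \<le> 1/4 + 1/4" using sq[OF h1(1)] sq[OF h1(2)] by linarith
  finally have "(cmod (c - q))^2 < 1^2" by simp
  then have lt: "cmod (c - q) < 1" using power2_less_imp_less by fastforce
  have eq: "a - q * b = (c - q) * b" using assms(3) by (simp add: c_def algebra_simps)
  have "cmod (a - q * b) < cmod b" unfolding eq norm_mult using lt assms(3) by simp
  then have "(cmod (a - q * b))^2 < (cmod b)^2" by (simp add: power_strict_mono)
  then have "real (gn (a - q * b)) < real (gn b)"
    using gn_real[of "a - q*b"] gn_real[of b] gq assms by (simp add: gauss_diff gauss_mult)
  then show ?thesis using gq by auto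
qed

lemma gauss_bezout:
  assumes p: "gprime p" and a: "gauss_int a" and nd: "\<not> gdvd p a"
  shows "\<exists>x y. gauss_int x \<and> gauss_int y \<and> x * p + y * a = 1"
proof -
  have gp: "gauss_int p" using p unfolding gprime_def by blast
  define P where "P g \<longleftrightarrow> (\<exists>x y. gauss_int x \<and> gauss_int y \<and> g = x*p + y*a) \<and> g \<noteq> 0" for g
  have "P p" unfolding P_def using gprime_nz[OF p] gp
    by (intro conjI exI[of _ 1] exI[of _ 0]) simp_all
  from ex_has_least_nat[of P p gn, OF this] obtain g where
    g: "P g" and gmin: "\<And>h. P h \<Longrightarrow> gn g \<le> gn h" by blast
  obtain x y where xy: "gauss_int x" "gauss_int y" "g = x*p + y*a" and gnz: "g \<noteq> 0"
    using g unfolding P_def by blast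
  have gg: "gauss_int g" using xy gp a by auto
  have dv: "gdvd g t" if "gauss_int x'" "gauss_int y'" "t = x'*p + y'*a" for x' y' t
  proof -
    have gt: "gauss_int t" using that gp a by auto
    obtain q where q: "gauss_int q" "gn (t - q * g) < gn g" using gauss_divmod[OF gt gg gnz] by blast
    have r: "t - q * g = (x' - q*x) * p + (y' - q*y) * a" using that xy by (simp add: algebra_simps)
    have "t - q * g = 0"
    proof (rule ccontr)
      assume "t - q * g \<noteq> 0"
      moreover have "gauss_int (x' - q*x)" "gauss_int (y' - q*y)" using q(1) xy that by auto
      ultimately have "P (t - q * g)" unfolding P_def using r by blast
      then have "gn g \<le> gn (t - q * g)" by (rule gmin)
      then show False using q(2) by simp
    qed
    then have "t = g * q" by simp
    then show ?thesis unfolding gdvd_def using q(1) by blast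
  qed
  have "gdvd g p" using dv[of 1 0 p] by simp
  then obtain c where c: "gauss_int c" "p = g * c" unfolding gdvd_def by blast
  have "gdvd g a" using dv[of 0 1 a] by simp
  then obtain d where d: "gauss_int d" "a = g * d" unfolding gdvd_def by blast
  have "gunit g \<or> gunit c" using p c gg unfolding gprime_def by blast
  moreover have "\<not> gunit c"
  proof
    assume cu: "gunit c"
    have "g = p * (1/c)" using c gunit_nz[OF cu] by simp
    then have "a = p * ((1/c) * d)" using d by simp
    moreover have "gauss_int ((1/c) * d)" by (rule gauss_mult[OF gunit_gauss[OF gunit_inv[OF cu]] d(1)])
    ultimately show False using nd unfolding gdvd_def by blast
  qed
  ultimately have gu: "gunit g" by blast
  have "((1/g) * x) * p + ((1/g) * y) * a = (1/g) * (x*p + y*a)" by (simp add: algebra_simps)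
  also have "\<dots> = (1/g) * g" using xy(3) by simp
  also have "\<dots> = 1" using gnz by simp
  finally have eq1: "((1/g) * x) * p + ((1/g) * y) * a = 1" .
  moreover have "gauss_int ((1/g) * x)" "gauss_int ((1/g) * y)"
    using gauss_mult[OF gunit_gauss[OF gunit_inv[OF gu]] xy(1)]
      gauss_mult[OF gunit_gauss[OF gunit_inv[OF gu]] xy(2)] by simp_all
  ultimately show ?thesis by blast
qed

lemma gauss_euclid:
  assumes p: "gprime p" and a: "gauss_int a" and b: "gauss_int b" and dv: "gdvd p (a * b)"
  shows "gdvd p a \<or> gdvd p b"
proof (cases "gdvd p a")
  case True then show ?thesis by blast
next
  case False
  then obtain x y where xy: "gauss_int x" "gauss_int y" "x * p + y * a = 1"
    using gauss_bezout[OF p a] by blast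
  obtain c where c: "gauss_int c" "a * b = p * c" using dv unfolding gdvd_def by blast
  have "b = (x * p + y * a) * b" using xy by simp
  also have "\<dots> = p * (x * b) + y * (a * b)" by (simp add: algebra_simps)
  also have "\<dots> = p * (x * b + y * c)" unfolding c(2) by (simp add: algebra_simps)
  finally have "b = p * (x * b + y * c)" .
  moreover have "gauss_int (x * b + y * c)" using xy c b by (simp add: gauss_add gauss_mult)
  ultimately have "gdvd p b" unfolding gdvd_def by blast
  then show ?thesis by blast
qed

lemma gauss_not_dvd_prod:
  assumes p: "gprime p" and "\<forall>w\<in>set ws. gauss_int w \<and> \<not> gdvd p w"
  shows "\<not> gdvd p (prod_list ws)"
  using assms(2)
proof (induction ws)
  case Nil then show ?case using gprime_not_dvd_1[OF p] by simp
next
  case (Cons w ws)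
  have "gauss_int (prod_list ws)" using Cons.prems by (intro gauss_prod_list) auto
  then show ?case using Cons gauss_euclid[OF p, of w "prod_list ws"] by auto
qed

lemma gauss_prime_divisor:
  assumes "gauss_int z" "gn z > 1"
  shows "\<exists>p c. gprime p \<and> gauss_int c \<and> z = p * c"
  using assms
proof (induction "gn z" arbitrary: z rule: less_induct)
  case less
  show ?case
  proof (cases "gprime z")
    case True then show ?thesis by (intro exI[of _ z] exI[of _ 1]) simp
  next
    case False
    have "\<not> (\<forall>a b. gauss_int a \<longrightarrow> gauss_int b \<longrightarrow> z = a * b \<longrightarrow> gunit a \<or> gunit b)"
      using False less.prems unfolding gprime_def by simp
    then obtain a b where ab: "gauss_int a" "gauss_int b" "z = a * b" "\<not> gunit a" "\<not> gunit b"
      by blast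
    have "gn a * gn b = gn z" using gn_mult ab by simp
    moreover have "gn z \<noteq> 0" using less.prems by simp
    ultimately have "gn a \<noteq> 0" "gn b \<noteq> 0" by (metis mult_is_0)+
    moreover have "gn a \<noteq> 1" "gn b \<noteq> 1" using gunit_iff ab by auto
    ultimately have ga: "gn a > 1" "gn b > 1" by simp_all
    have "gn a * 1 < gn a * gn b" using ga by simp
    then have "gn a < gn z" using \<open>gn a * gn b = gn z\<close> by simp
    then obtain p c where pc: "gprime p" "gauss_int c" "a = p * c"
      using less.hyps[of a] ab ga by blast
    have "z = p * (c * b)" using ab pc by simp
    moreover have "gauss_int (c * b)" by (rule gauss_mult[OF pc(2) ab(2)])
    ultimately show ?thesis using pc(1) by blast
  qed
qed

lemma gauss_decomp:
  assumes p: "gprime p" and "gauss_int z" "z \<noteq> 0"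
  shows "\<exists>e w. gauss_int w \<and> \<not> gdvd p w \<and> z = p ^ e * w"
  using assms(2,3)
proof (induction "gn z" arbitrary: z rule: less_induct)
  case less
  show ?case
  proof (cases "gdvd p z")
    case False then show ?thesis using less.prems by (intro exI[of _ 0] exI[of _ z]) simp
  next
    case True
    then obtain c where c: "gauss_int c" "z = p * c" unfolding gdvd_def by blast
    have gp: "gauss_int p" "gn p > 1" using p unfolding gprime_def by blast+
    have cnz: "c \<noteq> 0" using c less.prems by auto
    have "gn z = gn p * gn c" using c gn_mult gp by simp
    moreover have "gn c > 0" using gn_0_iff[OF c(1)] cnz by auto
    ultimately have "gn c < gn z" using gp(2) by simp
    then obtain e w where ew: "gauss_int w" "\<not> gdvd p w" "c = p ^ e * w"
      using less.hyps[of c] c cnz by blast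
    have "z = p ^ Suc e * w" using c ew by simp
    then show ?thesis using ew by blast
  qed
qed

lemma gauss_decomp_unique:
  assumes p: "gprime p" and u: "gauss_int u" "\<not> gdvd p u" and v: "gauss_int v" "\<not> gdvd p v"
    and as: "gassoc (p ^ a * u) (p ^ b * v)"
  shows "a = b \<and> gassoc u v"
proof -
  have gp: "gauss_int p" using p unfolding gprime_def by blast
  have pnz: "p \<noteq> 0" using gprime_nz[OF p] .
  obtain c where c: "gunit c" "p ^ b * v = c * (p ^ a * u)" using as unfolding gassoc_iff by blast
  have cnz: "c \<noteq> 0" using gunit_nz[OF c(1)] .
  have gc: "gauss_int (1/c)" "gauss_int c" using gunit_gauss[OF gunit_inv[OF c(1)]] gunit_gauss[OF c(1)] .
  consider "a < b" | "b < a" | "a = b" by linarith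
  then show ?thesis
  proof cases
    case 1
    define d where "d = b - a - 1"
    have d: "b = a + Suc d" using 1 by (simp add: d_def)
    have e1: "p ^ b * v = p ^ a * (p ^ Suc d * v)" unfolding d by (simp only: power_add mult.assoc)
    have e2: "c * (p ^ a * u) = p ^ a * (c * u)" by (simp only: mult.left_commute)
    have "p ^ a * (p ^ Suc d * v) = p ^ a * (c * u)" using c(2) e1 e2 by simp
    then have e3: "p ^ Suc d * v = c * u" using pnz by simp
    have "u = (1/c) * (c * u)" using cnz by simp
    also have "\<dots> = p * ((1/c) * (p ^ d * v))" unfolding e3[symmetric] by (simp only: power_Suc mult_ac)
    finally have "u = p * ((1/c) * (p ^ d * v))" .
    moreover have "gauss_int ((1/c) * (p ^ d * v))"
      by (rule gauss_mult[OF gc(1) gauss_mult[OF gauss_power[OF gp] v(1)]])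
    ultimately show ?thesis using u unfolding gdvd_def by blast
  next
    case 2
    define d where "d = a - b - 1"
    have d: "a = b + Suc d" using 2 by (simp add: d_def)
    have e1: "c * (p ^ a * u) = p ^ b * (p * (c * (p ^ d * u)))" unfolding d
      by (simp only: power_add power_Suc mult_ac)
    have "p ^ b * v = p ^ b * (p * (c * (p ^ d * u)))" using c(2) e1 by simp
    then have "v = p * (c * (p ^ d * u))" using pnz by simp
    moreover have "gauss_int (c * (p ^ d * u))"
      by (rule gauss_mult[OF gc(2) gauss_mult[OF gauss_power[OF gp] u(1)]])
    ultimately show ?thesis using v unfolding gdvd_def by blast
  next
    case 3
    then have "p ^ a * v = p ^ a * (c * u)" using c(2) by (simp only: mult.left_commute)
    then have "v = c * u" using pnz by simp
    then show ?thesis using 3 c(1) unfolding gassoc_iff by blast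
  qed
qed



definition At :: "nat \<Rightarrow> complex \<Rightarrow> complex list set" where
  "At k z = {ds. length ds = k \<and> (\<forall>d \<in> set ds. gauss_int d \<and> d \<noteq> 0) \<and> gassoc (prod_list ds) z}"
definition Rt :: "nat \<Rightarrow> complex \<Rightarrow> (complex list \<times> complex list) set" where
  "Rt k z = {(ds, es). ds \<in> At k z \<and> es \<in> At k z \<and> list_all2 gassoc ds es}"
definition cnt :: "nat \<Rightarrow> complex \<Rightarrow> nat" where
  "cnt k z = card (At k z // Rt k z)"

lemma gt_cnt: "gt k n = cnt k (of_nat n)"
  unfolding gt_def cnt_def gtuples_def gtuple_rel_def At_def Rt_def by simp

lemma list_all2_gassoc_sym: "list_all2 gassoc xs ys \<Longrightarrow> list_all2 gassoc ys xs"
  by (simp add: list_all2_conv_all_nth gassoc_sym)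

lemma equiv_Rt: "equiv (At k z) (Rt k z)"
proof (rule equivI)
  show "refl_on (At k z) (Rt k z)" unfolding refl_on_def Rt_def
    by (auto intro: list_all2_refl)
  show "sym (Rt k z)" unfolding sym_def Rt_def using list_all2_gassoc_sym by blast
  show "trans (Rt k z)" unfolding trans_def Rt_def
    using list_all2_trans[of gassoc gassoc gassoc] gassoc_trans by blast
  show "Rt k z \<subseteq> At k z \<times> At k z" unfolding Rt_def by auto
qed

lemma card_quotient_by_fun:
  assumes eq: "equiv A R" and F: "\<And>x y. x \<in> A \<Longrightarrow> y \<in> A \<Longrightarrow> (x, y) \<in> R \<longleftrightarrow> F x = F y"
  shows "card (A // R) = card (F ` A)"
proof -
  define \<Phi> where "\<Phi> X = the_elem (F ` X)" for X
  have cls: "\<Phi> (R `` {x}) = F x" if x: "x \<in> A" for x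
  proof -
    have "F ` (R `` {x}) = {F x}"
    proof
      show "F ` (R `` {x}) \<subseteq> {F x}"
      proof
        fix t assume "t \<in> F ` (R `` {x})"
        then obtain y where y: "(x, y) \<in> R" "t = F y" by blast
        have "y \<in> A" using y(1) eq unfolding equiv_def refl_on_def by blast
        then show "t \<in> {F x}" using F[OF x] y by simp
      qed
      show "{F x} \<subseteq> F ` (R `` {x})" using x eq unfolding equiv_def refl_on_def by blast
    qed
    then show ?thesis unfolding \<Phi>_def by simp
  qed
  have img: "\<Phi> ` (A // R) = F ` A"
  proof
    show "\<Phi> ` (A // R) \<subseteq> F ` A"
    proof
      fix t assume "t \<in> \<Phi> ` (A // R)"
      then obtain X where X: "X \<in> A // R" "t = \<Phi> X" by blast
      then obtain x where "x \<in> A" "X = R `` {x}" by (auto elim: quotientE)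
      then show "t \<in> F ` A" using cls X by simp
    qed
    show "F ` A \<subseteq> \<Phi> ` (A // R)"
    proof
      fix t assume "t \<in> F ` A"
      then obtain x where x: "x \<in> A" "t = F x" by blast
      then have "t = \<Phi> (R `` {x})" using cls by simp
      moreover have "R `` {x} \<in> A // R" using x(1) by (rule quotientI)
      ultimately show "t \<in> \<Phi> ` (A // R)" by blast
    qed
  qed
  have "inj_on \<Phi> (A // R)"
  proof
    fix X Y assume X: "X \<in> A // R" and Y: "Y \<in> A // R" and e: "\<Phi> X = \<Phi> Y"
    obtain x where x: "x \<in> A" "X = R `` {x}" using X by (auto elim: quotientE)
    obtain y where y: "y \<in> A" "Y = R `` {y}" using Y by (auto elim: quotientE)
    have "F x = F y" using e cls x y by simp
    then have "(x, y) \<in> R" using F x y by blast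
    then show "X = Y" using x y eq equiv_class_eq by metis
  qed
  then show ?thesis using card_image img by fastforce
qed

lemma gn_prod_list: "(\<forall>d\<in>set ds. gauss_int d) \<Longrightarrow> gn (prod_list ds) = prod_list (map gn ds)"
proof (induction ds)
  case Nil then show ?case by (simp add: gn_def)
next
  case (Cons d ds)
  then have "gauss_int (prod_list ds)" by (intro gauss_prod_list) simp
  then show ?case using Cons gn_mult by simp
qed

lemma prod_list_nat_1: "prod_list (xs :: nat list) = 1 \<Longrightarrow> x \<in> set xs \<Longrightarrow> x = 1"
  by (induction xs) auto

lemma cnt_unit: assumes u: "gunit u" and k: "k \<ge> 1" shows "cnt k u = 1"
proof -
  have allu: "\<forall>d\<in>set ds. gunit d" if ds: "ds \<in> At k u" for ds
  proof
    fix d assume d: "d \<in> set ds"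
    have g: "\<forall>d\<in>set ds. gauss_int d" using ds unfolding At_def by blast
    have "gn u = gn (prod_list ds)" using ds gauss_prod_list[OF g] unfolding At_def
      using gassoc_gn by blast
    then have "prod_list (map gn ds) = 1" using gn_gunit[OF u] gn_prod_list[OF g] by simp
    then have "gn d = 1" using prod_list_nat_1 d by simp
    then show "gunit d" using gn_1_gunit g d by blast
  qed
  have "card (At k u // Rt k u) = card ((\<lambda>_. (0::nat)) ` At k u)"
  proof (rule card_quotient_by_fun[OF equiv_Rt])
    fix x y assume x: "x \<in> At k u" and y: "y \<in> At k u"
    have "list_all2 gassoc x y"
    proof (rule list_all2_all_nthI)
      show "length x = length y" using x y unfolding At_def by simp
      fix n assume "n < length x"
      moreover have "length y = length x" using x y unfolding At_def by simp
      ultimately show "gassoc (x ! n) (y ! n)" using allu[OF x] allu[OF y] gassoc_units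
        by (metis nth_mem)
    qed
    then show "(x, y) \<in> Rt k u \<longleftrightarrow> (0::nat) = 0" using x y unfolding Rt_def by simp
  qed
  moreover have "u # replicate (k - 1) 1 \<in> At k u"
    unfolding At_def using k gunit_gauss[OF u] gunit_nz[OF u] by auto
  then have "(\<lambda>_. (0::nat)) ` At k u = {0}" by blast
  ultimately show ?thesis unfolding cnt_def by simp
qed

lemma At_cong: "gassoc z z' \<Longrightarrow> At k z = At k z'"
  unfolding At_def using gassoc_trans gassoc_sym by blast

lemma cnt_cong: "gassoc z z' \<Longrightarrow> cnt k z = cnt k z'"
  unfolding cnt_def Rt_def using At_cong by simp



definition ep :: "complex \<Rightarrow> complex \<Rightarrow> nat" where
  "ep p d = (SOME e. \<exists>w. gauss_int w \<and> \<not> gdvd p w \<and> d = p ^ e * w)"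
definition wp :: "complex \<Rightarrow> complex \<Rightarrow> complex" where
  "wp p d = (SOME w. gauss_int w \<and> \<not> gdvd p w \<and> d = p ^ ep p d * w)"

lemma dec_spec:
  assumes p: "gprime p" and d: "gauss_int d" "d \<noteq> 0"
  shows "gauss_int (wp p d) \<and> \<not> gdvd p (wp p d) \<and> d = p ^ ep p d * wp p d"
proof -
  have "\<exists>e w. gauss_int w \<and> \<not> gdvd p w \<and> d = p ^ e * w" using gauss_decomp[OF p d] .
  then have "\<exists>w. gauss_int w \<and> \<not> gdvd p w \<and> d = p ^ ep p d * w"
    unfolding ep_def by (rule someI_ex)
  then show ?thesis unfolding wp_def by (rule someI_ex)
qed

lemma gdvd_0: "gdvd p 0" unfolding gdvd_def by (rule exI[of _ 0]) simp

lemma dec_eq: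
  assumes p: "gprime p" and w: "gauss_int w" "\<not> gdvd p w"
  shows "ep p (p ^ e * w) = e \<and> wp p (p ^ e * w) = w"
proof -
  have gp: "gauss_int p" using p unfolding gprime_def by blast
  have wnz: "w \<noteq> 0" using w gdvd_0 by blast
  have nz: "p ^ e * w \<noteq> 0" using wnz gprime_nz[OF p] by simp
  have gd: "gauss_int (p ^ e * w)" by (rule gauss_mult[OF gauss_power[OF gp] w(1)])
  note s = dec_spec[OF p gd nz]
  have "gassoc (p ^ ep p (p ^ e * w) * wp p (p ^ e * w)) (p ^ e * w)" using s by simp
  then have e: "ep p (p ^ e * w) = e" using gauss_decomp_unique[OF p _ _ w] s by blast
  have h: "p ^ e * w = p ^ ep p (p ^ e * w) * wp p (p ^ e * w)" using s by blast
  then have "p ^ e * w = p ^ e * wp p (p ^ e * w)" unfolding e .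
  then have "wp p (p ^ e * w) = w" using gprime_nz[OF p] by simp
  then show ?thesis using e by simp
qed

lemma dec_assoc:
  assumes p: "gprime p" and d: "gauss_int d" "d \<noteq> 0" and a: "gassoc d d'"
  shows "ep p d = ep p d' \<and> gassoc (wp p d) (wp p d')"
proof -
  have d': "gauss_int d'" "d' \<noteq> 0" using gassoc_gauss[OF a d(1)] gassoc_nz[OF a d(2)] by auto
  note s = dec_spec[OF p d] and s' = dec_spec[OF p d']
  have "gassoc (p ^ ep p d * wp p d) (p ^ ep p d' * wp p d')" using s s' a by simp
  then show ?thesis using gauss_decomp_unique[OF p] s s' by blast
qed

lemma prod_dec:
  assumes p: "gprime p" and ds: "\<forall>d\<in>set ds. gauss_int d \<and> d \<noteq> 0"
  shows "prod_list ds = p ^ sum_list (map (ep p) ds) * prod_list (map (wp p) ds)"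
  using ds
proof (induction ds)
  case Nil then show ?case by simp
next
  case (Cons d ds)
  have s: "d = p ^ ep p d * wp p d" using dec_spec[OF p] Cons.prems by simp
  have "prod_list (d # ds) = (p ^ ep p d * wp p d) * (p ^ sum_list (map (ep p) ds) * prod_list (map (wp p) ds))"
    using Cons s by simp
  also have "\<dots> = p ^ (ep p d + sum_list (map (ep p) ds)) * (wp p d * prod_list (map (wp p) ds))"
    by (simp only: power_add mult_ac)
  finally show ?case by simp
qed

lemma gdvd_prod_list:
  assumes "gdvd p x" "x \<in> set xs" "\<forall>d\<in>set xs. gauss_int d"
  shows "gdvd p (prod_list xs)"
  using assms(2,3)
proof (induction xs)
  case Nil then show ?case by simp
next
  case (Cons y ys)
  show ?case
  proof (cases "x = y")
    case True
    have "gauss_int (prod_list ys)" using Cons.prems by (intro gauss_prod_list) simp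
    then show ?thesis using gdvd_mult_right[OF assms(1)] True by simp
  next
    case False
    then have "gdvd p (prod_list ys)" using Cons by simp
    then show ?thesis using gdvd_mult_left Cons.prems by simp
  qed
qed

lemma At_not_dvd:
  assumes "ws \<in> At k w" "\<not> gdvd p w" "x \<in> set ws"
  shows "\<not> gdvd p x"
proof
  assume "gdvd p x"
  then have g: "gdvd p (prod_list ws)" using gdvd_prod_list assms unfolding At_def by blast
  obtain u where u: "gunit u" "w = u * prod_list ws" using assms(1) unfolding At_def gassoc_iff by blast
  have "gdvd p w" unfolding u(2) by (rule gdvd_mult_left[OF g gunit_gauss[OF u(1)]])
  then show False using assms(2) by blast
qed



definition Comp :: "nat \<Rightarrow> nat \<Rightarrow> nat list set" where
  "Comp k e = {l. length l = k \<and> sum_list l = e}"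

lemma split_cnt:
  assumes p: "gprime p" and w: "gauss_int w" "w \<noteq> 0" "\<not> gdvd p w"
  shows "cnt k (p ^ e * w) = card (Comp k e) * cnt k w"
proof -
  have gp: "gauss_int p" using p unfolding gprime_def by blast
  define F where "F ds = (map (ep p) ds, Rt k w `` {map (wp p) ds})" for ds
  let ?Az = "At k (p ^ e * w)" and ?Aw = "At k w"
  have M: "map (wp p) ds \<in> ?Aw \<and> sum_list (map (ep p) ds) = e" if ds: "ds \<in> ?Az" for ds
  proof -
    have dsg: "\<forall>d\<in>set ds. gauss_int d \<and> d \<noteq> 0" using ds unfolding At_def by blast
    have ws: "\<forall>x\<in>set (map (wp p) ds). gauss_int x \<and> \<not> gdvd p x \<and> x \<noteq> 0"
      using dec_spec[OF p] dsg gdvd_0 by fastforce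
    have W: "gauss_int (prod_list (map (wp p) ds))" using ws by (intro gauss_prod_list) blast
    have nW: "\<not> gdvd p (prod_list (map (wp p) ds))" using gauss_not_dvd_prod[OF p] ws by blast
    have "gassoc (prod_list ds) (p ^ e * w)" using ds unfolding At_def by blast
    then have "gassoc (p ^ sum_list (map (ep p) ds) * prod_list (map (wp p) ds)) (p ^ e * w)"
      using prod_dec[OF p dsg] by simp
    then have r: "sum_list (map (ep p) ds) = e \<and> gassoc (prod_list (map (wp p) ds)) w"
      using gauss_decomp_unique[OF p W nW w(1) w(3)] by blast
    have "length (map (wp p) ds) = k" using ds unfolding At_def by simp
    then show ?thesis using r ws unfolding At_def by blast
  qed
  have E: "(x, y) \<in> Rt k (p ^ e * w) \<longleftrightarrow> F x = F y" if x: "x \<in> ?Az" and y: "y \<in> ?Az" for x y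
  proof
    assume "(x, y) \<in> Rt k (p ^ e * w)"
    then have xy: "list_all2 gassoc x y" unfolding Rt_def by blast
    have xg: "\<forall>d\<in>set x. gauss_int d \<and> d \<noteq> 0" using x unfolding At_def by blast
    have len: "length x = length y" using xy list_all2_lengthD by blast
    have nth: "ep p (x ! i) = ep p (y ! i) \<and> gassoc (wp p (x ! i)) (wp p (y ! i))" if "i < length x" for i
      using dec_assoc[OF p, of "x ! i" "y ! i"] xg that xy by (simp add: list_all2_conv_all_nth)
    have "map (ep p) x = map (ep p) y" using nth len by (simp add: list_eq_iff_nth_eq)
    moreover have "list_all2 gassoc (map (wp p) x) (map (wp p) y)"
      using nth len by (simp add: list_all2_conv_all_nth)
    then have "(map (wp p) x, map (wp p) y) \<in> Rt k w" unfolding Rt_def using M x y by blast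
    then have "Rt k w `` {map (wp p) x} = Rt k w `` {map (wp p) y}"
      using equiv_class_eq[OF equiv_Rt] by blast
    ultimately show "F x = F y" unfolding F_def by simp
  next
    assume "F x = F y"
    then have e1: "map (ep p) x = map (ep p) y" and
      e2: "Rt k w `` {map (wp p) x} = Rt k w `` {map (wp p) y}" unfolding F_def by simp_all
    have "(map (wp p) x, map (wp p) y) \<in> Rt k w"
      using e2 eq_equiv_class_iff[OF equiv_Rt] M x y by blast
    then have la: "list_all2 gassoc (map (wp p) x) (map (wp p) y)" unfolding Rt_def by blast
    have xg: "\<forall>d\<in>set x. gauss_int d \<and> d \<noteq> 0" using x unfolding At_def by blast
    have yg: "\<forall>d\<in>set y. gauss_int d \<and> d \<noteq> 0" using y unfolding At_def by blast
    have len: "length x = length y" using x y unfolding At_def by simp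
    have "gassoc (x ! i) (y ! i)" if i: "i < length x" for i
    proof -
      have sx: "x ! i = p ^ ep p (x ! i) * wp p (x ! i)" using dec_spec[OF p] xg i by simp
      have sy: "y ! i = p ^ ep p (y ! i) * wp p (y ! i)" using dec_spec[OF p] yg i len by simp
      have ee: "ep p (x ! i) = ep p (y ! i)" using e1 i len by (metis nth_map)
      have "gassoc (wp p (x ! i)) (wp p (y ! i))" using la i len by (simp add: list_all2_conv_all_nth)
      then have "gassoc (p ^ ep p (x ! i) * wp p (x ! i)) (p ^ ep p (x ! i) * wp p (y ! i))"
        by (rule gassoc_mult_left)
      then show ?thesis using sx sy ee by simp
    qed
    then have "list_all2 gassoc x y" using len by (simp add: list_all2_conv_all_nth)
    then show "(x, y) \<in> Rt k (p ^ e * w)" unfolding Rt_def using x y by blast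
  qed
  have S: "F ` ?Az = Comp k e \<times> (?Aw // Rt k w)"
  proof
    show "F ` ?Az \<subseteq> Comp k e \<times> (?Aw // Rt k w)"
    proof
      fix t assume "t \<in> F ` ?Az"
      then obtain ds where ds: "ds \<in> ?Az" "t = F ds" by blast
      have "length ds = k" using ds unfolding At_def by simp
      then have "map (ep p) ds \<in> Comp k e" using M[OF ds(1)] unfolding Comp_def by simp
      moreover have "Rt k w `` {map (wp p) ds} \<in> ?Aw // Rt k w"
        using M[OF ds(1)] by (intro quotientI) blast
      ultimately show "t \<in> Comp k e \<times> (?Aw // Rt k w)" unfolding ds(2) F_def by simp
    qed
    show "Comp k e \<times> (?Aw // Rt k w) \<subseteq> F ` ?Az"
    proof
      fix t assume "t \<in> Comp k e \<times> (?Aw // Rt k w)"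
      then obtain es X where t: "t = (es, X)" "es \<in> Comp k e" "X \<in> ?Aw // Rt k w" by blast
      then obtain ws where ws: "ws \<in> ?Aw" "X = Rt k w `` {ws}" by (auto elim: quotientE)
      have les: "length es = k" "sum_list es = e" using t(2) unfolding Comp_def by auto
      have lws: "length ws = k" using ws unfolding At_def by simp
      have wsg: "\<forall>x\<in>set ws. gauss_int x \<and> x \<noteq> 0" using ws unfolding At_def by blast
      have wsn: "\<forall>x\<in>set ws. \<not> gdvd p x" using At_not_dvd[OF ws(1) w(3)] by blast
      define ds where "ds = map (\<lambda>i. p ^ (es ! i) * ws ! i) [0..<k]"
      have ldsk: "length ds = k" unfolding ds_def by simp
      have dsi: "ds ! i = p ^ (es ! i) * ws ! i" if "i < k" for i using that unfolding ds_def by simp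
      have wsi: "gauss_int (ws ! i) \<and> ws ! i \<noteq> 0 \<and> \<not> gdvd p (ws ! i)" if "i < k" for i
        using wsg wsn that lws nth_mem by metis
      have dec_i: "ep p (ds ! i) = es ! i \<and> wp p (ds ! i) = ws ! i" if "i < k" for i
        using dsi[OF that] dec_eq[OF p] wsi[OF that] by simp
      have me: "map (ep p) ds = es" using dec_i ldsk les by (simp add: list_eq_iff_nth_eq)
      have mw: "map (wp p) ds = ws" using dec_i ldsk lws by (simp add: list_eq_iff_nth_eq)
      have dsg: "\<forall>d\<in>set ds. gauss_int d \<and> d \<noteq> 0"
      proof
        fix d assume "d \<in> set ds"
        then obtain i where i: "i < k" "d = ds ! i" using ldsk by (metis in_set_conv_nth)
        have "gauss_int (p ^ (es ! i) * ws ! i)"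
          using gauss_mult[OF gauss_power[OF gp]] wsi[OF i(1)] by blast
        moreover have "p ^ (es ! i) * ws ! i \<noteq> 0" using gprime_nz[OF p] wsi[OF i(1)] by simp
        ultimately show "gauss_int d \<and> d \<noteq> 0" using dsi i by simp
      qed
      have "prod_list ds = p ^ e * prod_list ws" using prod_dec[OF p dsg] me mw les by simp
      moreover have "gassoc (prod_list ws) w" using ws unfolding At_def by blast
      ultimately have "gassoc (prod_list ds) (p ^ e * w)" using gassoc_mult_left by simp
      then have "ds \<in> ?Az" unfolding At_def using ldsk dsg by blast
      moreover have "F ds = t" unfolding F_def t(1) ws(2) me mw by simp
      ultimately show "t \<in> F ` ?Az" by blast
    qed
  qed
  have "cnt k (p ^ e * w) = card (F ` ?Az)"
    unfolding cnt_def by (rule card_quotient_by_fun[OF equiv_Rt E])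
  also have "\<dots> = card (Comp k e) * card (?Aw // Rt k w)" unfolding S by (rule card_cartesian_product)
  finally show ?thesis unfolding cnt_def .
qed



lemma card_Comp: "card (Comp k e) = (e + k - 1) choose e"
  unfolding Comp_def using card_length_sum_list by simp

lemma two_mult_le_pow: "2 * n \<le> (2::nat) ^ n"
proof (induction n)
  case 0 then show ?case by simp
next
  case (Suc n)
  show ?case
  proof (cases "n = 0")
    case True then show ?thesis by simp
  next
    case False
    then have "1 \<le> n" by simp
    then have "(2::nat) \<le> 2 ^ n" using power_increasing[of 1 n "2::nat"] by simp
    then show ?thesis using Suc by simp
  qed
qed

lemma binom_le_pow_aux: "(e + j) choose e \<le> (Suc j) ^ e"
proof (induction e)
  case 0 then show ?case by simp
next
  case (Suc e)
  have eq: "Suc e * (Suc (e + j) choose Suc e) = Suc (e + j) * ((e + j) choose e)"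
    by (rule Suc_times_binomial)
  have h1: "Suc (e + j) * ((e + j) choose e) \<le> Suc (e + j) * (Suc j) ^ e"
    by (rule mult_le_mono2[OF Suc])
  have h2: "Suc (e + j) \<le> Suc e * Suc j" by simp
  have h3: "Suc (e + j) * (Suc j) ^ e \<le> (Suc e * Suc j) * (Suc j) ^ e" by (rule mult_le_mono1[OF h2])
  have "Suc e * (Suc (e + j) choose Suc e) \<le> Suc e * (Suc j * (Suc j) ^ e)"
    using eq h1 h3 by (simp only: mult.assoc)
  then have "Suc (e + j) choose Suc e \<le> Suc j * (Suc j) ^ e" by (simp only: Suc_mult_le_cancel1)
  then show ?case by simp
qed

lemma binom_le_pow: assumes "k \<ge> 1" shows "(e + k - 1) choose e \<le> k ^ e"
proof -
  obtain j where "k = Suc j" using assms by (cases k) auto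
  then show ?thesis using binom_le_pow_aux[of e j] by simp
qed

lemma C_times_2: "2 * ((k + 1) choose 2) = (k + 1) * k"
proof -
  have "even ((k + 1) * k)" by simp
  then show ?thesis by (simp add: choose_two)
qed

lemma C_ge_k: "k \<le> (k + 1) choose 2"
proof -
  have "2 * k \<le> (k + 1) * k" by (cases k) auto
  then show ?thesis using C_times_2[of k] by linarith
qed

lemma comp4: assumes "k \<ge> 1" shows "(4 + k - 1) choose 4 \<le> ((k + 1) choose 2) ^ 2"
proof -
  define X4 where "X4 = (k + 3) choose 4"
  define X3 where "X3 = (k + 2) choose 3"
  define X2 where "X2 = (k + 1) choose 2"
  have a1: "4 * X4 = (k + 3) * X3"
    using Suc_times_binomial[of 3 "k + 2"] unfolding X4_def X3_def by (simp add: numeral_eq_Suc)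
  have a2: "3 * X3 = (k + 2) * X2"
    using Suc_times_binomial[of 2 "k + 1"] unfolding X3_def X2_def by (simp add: numeral_eq_Suc)
  have a3: "2 * X2 = (k + 1) * k" unfolding X2_def by (rule C_times_2)
  have "24 * X4 = 6 * (4 * X4)" by simp
  also have "\<dots> = 6 * ((k + 3) * X3)" unfolding a1 ..
  also have "\<dots> = 2 * (k + 3) * (3 * X3)" by simp
  also have "\<dots> = (k + 3) * (k + 2) * (2 * X2)" unfolding a2 by (simp add: algebra_simps)
  finally have b1: "24 * X4 = (k + 3) * (k + 2) * (2 * X2)" .
  have "24 * (X2 ^ 2) = 6 * (2 * X2) * (2 * X2)" by (simp add: power2_eq_square)
  also have "\<dots> = 6 * ((k + 1) * k) * (2 * X2)" by (simp only: a3)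
  finally have b2: "24 * (X2 ^ 2) = 6 * ((k + 1) * k) * (2 * X2)" .
  have e1: "(k + 3) * (k + 2) = k * k + 5 * k + 6" by (simp add: algebra_simps)
  have e2: "6 * ((k + 1) * k) = 6 * (k * k) + 6 * k" by (simp add: algebra_simps)
  have kk: "k \<le> k * k" using assms by simp
  have key: "(k + 3) * (k + 2) \<le> 6 * ((k + 1) * k)" unfolding e1 e2 using kk assms by linarith
  have "24 * X4 \<le> 24 * (X2 ^ 2)" unfolding b1 b2 by (rule mult_le_mono1[OF key])
  then have "X4 \<le> X2 ^ 2" by simp
  moreover have "4 + k - 1 = k + 3" by simp
  ultimately show ?thesis unfolding X4_def X2_def by (simp add: add.commute)
qed

lemma pow_big: assumes "k \<ge> 1" shows "k ^ (2 * (b + 3)) \<le> ((k + 1) choose 2) ^ (2 ^ (b + 2))"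
proof (induction b)
  case 0
  define C where "C = (k + 1) choose 2"
  have a3: "2 * C = (k + 1) * k" unfolding C_def by (rule C_times_2)
  have "4 * k \<le> (k + 1) ^ 2" 
  proof -
    have "(k + 1) ^ 2 = k * k + 2 * k + 1" by (simp add: power2_eq_square algebra_simps)
    moreover have "2 * k \<le> k * k + 1"
    proof (cases "k = 1")
      case True then show ?thesis by simp
    next
      case False then have "2 \<le> k" using assms by simp
      then have "2 * k \<le> k * k" by (rule mult_le_mono1)
      then show ?thesis by linarith
    qed
    ultimately show ?thesis by linarith
  qed
  then have "(4 * k) ^ 2 \<le> ((k + 1) ^ 2) ^ 2" by (rule power_mono) simp
  then have h: "16 * k ^ 2 \<le> (k + 1) ^ 4" by (simp add: power_mult_distrib flip: power_mult)
  have "16 * k ^ 6 = k ^ 4 * (16 * k ^ 2)" by (simp add: power_add[symmetric] algebra_simps flip: power_add)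
  also have "\<dots> \<le> k ^ 4 * (k + 1) ^ 4" by (rule mult_le_mono2[OF h])
  also have "\<dots> = ((k + 1) * k) ^ 4" by (metis power_mult_distrib mult.commute)
  also have "\<dots> = (2 * C) ^ 4" unfolding a3 ..
  also have "\<dots> = 16 * C ^ 4" by (simp add: power_mult_distrib)
  finally have "k ^ 6 \<le> C ^ 4" by simp
  then show ?case unfolding C_def by simp
next
  case (Suc b)
  define C where "C = (k + 1) choose 2"
  have kC: "k \<le> C" unfolding C_def by (rule C_ge_k)
  have C1: "1 \<le> C" using kC assms by simp
  have "2 \<le> (2::nat) ^ (b + 2)" using power_increasing[of 1 "b+2" "2::nat"] by simp
  then have c2: "C ^ 2 \<le> C ^ (2 ^ (b + 2))" using power_increasing[OF _ C1] by blast
  have "k ^ (2 * (Suc b + 3)) = k ^ (2 * (b + 3)) * k ^ 2" by (simp add: power_add[symmetric])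
  also have "\<dots> \<le> C ^ (2 ^ (b + 2)) * C ^ 2"
    using Suc kC unfolding C_def by (intro mult_le_mono power_mono) (simp_all add: C_def)
  also have "\<dots> \<le> C ^ (2 ^ (b + 2)) * C ^ (2 ^ (b + 2))" using c2 by simp
  also have "\<dots> = C ^ (2 ^ (Suc b + 2))" by (simp add: power_add[symmetric])
  finally show ?case unfolding C_def .
qed

lemma comp_two_pow:
  assumes k: "k \<ge> 1" and a: "a \<ge> 1"
  shows "card (Comp k (2 * a)) \<le> ((k + 1) choose 2) ^ (2 ^ (a - 1))"
proof -
  consider "a = 1" | "a = 2" | "a \<ge> 3" using a by linarith
  then show ?thesis
  proof cases
    case 1 then show ?thesis unfolding card_Comp using k by simp
  next
    case 2 then show ?thesis unfolding card_Comp using comp4[OF k] by simp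
  next
    case 3
    then obtain b where b: "a = b + 3" by (metis add.commute le_Suc_ex)
    have "card (Comp k (2 * a)) \<le> k ^ (2 * a)" unfolding card_Comp by (rule binom_le_pow[OF k])
    also have "\<dots> \<le> ((k + 1) choose 2) ^ (2 ^ (a - 1))"
      using pow_big[OF k, of b] b by (simp add: numeral_eq_Suc)
    finally show ?thesis .
  qed
qed



lemma odd_ge4: "odd (x::nat) \<Longrightarrow> x > 1 \<Longrightarrow> x \<noteq> 3 \<Longrightarrow> x \<ge> 4"
proof -
  assume "odd x" "x > 1" "x \<noteq> 3"
  moreover have "x \<noteq> 2" using \<open>odd x\<close> by auto
  ultimately show "x \<ge> 4" by linarith
qed

lemma cmod_ge2: assumes "gauss_int z" "gn z \<ge> 4" shows "cmod z \<ge> 2"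
proof -
  have "(2::real)^2 \<le> (cmod z)^2" using gn_real[OF assms(1)] assms(2) by simp
  then show ?thesis by (rule power2_le_imp_le) simp
qed

lemma sum_le_prod: fixes x y :: real assumes "x \<ge> 2" "y \<ge> 2" shows "x + y \<le> x * y"
proof -
  have "1 * 1 \<le> (x - 1) * (y - 1)" using assms by (intro mult_mono) auto
  then show ?thesis by (simp add: algebra_simps)
qed

lemma odd_bound:
  assumes k: "k \<ge> 2"
  shows "gauss_int z \<Longrightarrow> odd (gn z) \<Longrightarrow> gn z > 1 \<Longrightarrow>
    real (cnt k z) \<le> real ((k + 1) choose 2) powr (cmod z / 2)"
proof (induction "gn z" arbitrary: z rule: less_induct)
  case less
  define C where "C = real ((k + 1) choose 2)"
  have Ck: "real k \<le> C" unfolding C_def using C_ge_k[of k] by simp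
  then have C1: "1 \<le> C" using k by simp
  have C0: "0 < C" using C1 by simp
  have gz: "gauss_int z" using less.prems by blast
  have znz: "z \<noteq> 0" using less.prems by (auto simp: gn_def)
  obtain p c where pc: "gprime p" "gauss_int c" "z = p * c"
    using gauss_prime_divisor[OF gz] less.prems by blast
  have gp: "gauss_int p" "gn p > 1" using pc(1) unfolding gprime_def by blast+
  obtain e w where ew: "gauss_int w" "\<not> gdvd p w" "z = p ^ e * w"
    using gauss_decomp[OF pc(1) gz znz] by blast
  have e1: "e \<ge> 1"
  proof (rule ccontr)
    assume "\<not> e \<ge> 1"
    then have "e = 0" by simp
    then have "z = w" using ew(3) by simp
    moreover have "gdvd p z" unfolding gdvd_def using pc by blast
    ultimately show False using ew by blast
  qed
  have wnz: "w \<noteq> 0" using ew znz by auto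
  have gnz: "gn z = gn p ^ e * gn w" using ew gn_mult gn_power gp gauss_power by simp
  have "gn z = gn p * gn c" using pc gn_mult gp by simp
  then have op: "odd (gn p)" using less.prems by simp
  have p4: "gn p \<ge> 4" using odd_ge4[OF op gp(2) gn_ne_3[OF gp(1)]] .
  have ow: "odd (gn w)" using gnz less.prems by simp
  have w1: "gn w \<ge> 1" using gn_0_iff[OF ew(1)] wnz by (cases "gn w") auto
  have "gn p \<le> gn p ^ e" using e1 gp(2) by (simp add: self_le_power)
  then have pe4: "4 \<le> gn p ^ e" using p4 by linarith
  have "4 * gn w \<le> gn z" unfolding gnz using pe4 by simp
  then have wlt: "gn w < gn z" using w1 by linarith
  have cp: "cmod p \<ge> 2" by (rule cmod_ge2[OF gp(1) p4])
  define x where "x = cmod p ^ e"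
  have x2: "x \<ge> 2 ^ e" unfolding x_def by (rule power_mono[OF cp]) simp
  have cz: "cmod z = x * cmod w" unfolding x_def ew(3) by (simp add: norm_mult norm_power)
  have cntz: "cnt k z = card (Comp k e) * cnt k w"
    unfolding ew(3) by (rule split_cnt[OF pc(1) ew(1) wnz ew(2)])
  have compb: "real (card (Comp k e)) \<le> C powr (x / 2)"
  proof -
    have "card (Comp k e) \<le> k ^ e" unfolding card_Comp using binom_le_pow k by simp
    then have "real (card (Comp k e)) \<le> real k ^ e" by (metis of_nat_le_iff of_nat_power)
    also have "\<dots> \<le> C ^ e" using Ck by (intro power_mono) auto
    also have "\<dots> = C powr (real e)" using C0 by (simp add: powr_realpow)
    also have "\<dots> \<le> C powr (x / 2)"
    proof (rule powr_mono[OF _ C1])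
      have "real (2 * e) \<le> real (2 ^ e)" using two_mult_le_pow[of e] by linarith
      then have "2 * real e \<le> 2 ^ e" by simp
      then show "real e \<le> x / 2" using x2 by simp
    qed
    finally show ?thesis .
  qed
  show ?case
  proof (cases "gn w = 1")
    case True
    have "gunit w" using gn_1_gunit[OF ew(1) True] .
    then have "cnt k w = 1" using cnt_unit k by simp
    moreover have "cmod w = 1"
    proof -
      have "(cmod w)^2 = 1" using gn_real[OF ew(1)] True by simp
      then have "cmod w = 1 \<or> cmod w = -1" using power2_eq_1_iff by blast
      then show ?thesis using norm_ge_zero[of w] by linarith
    qed
    ultimately show ?thesis using cntz compb cz unfolding C_def by simp
  next
    case False
    then have gw1: "gn w > 1" using w1 by simp
    have IH: "real (cnt k w) \<le> C powr (cmod w / 2)"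
      unfolding C_def using less.hyps[OF wlt] ew(1) ow gw1 by blast
    have cw: "cmod w \<ge> 2" using cmod_ge2[OF ew(1) odd_ge4[OF ow gw1 gn_ne_3[OF ew(1)]]] .
    have "real (cnt k z) = real (card (Comp k e)) * real (cnt k w)" using cntz by simp
    also have "\<dots> \<le> C powr (x / 2) * C powr (cmod w / 2)"
      using compb IH by (intro mult_mono) auto
    also have "\<dots> = C powr ((x + cmod w) / 2)" by (simp add: powr_add[symmetric] add_divide_distrib)
    also have "\<dots> \<le> C powr ((x * cmod w) / 2)"
    proof (rule powr_mono[OF _ C1])
      have "x \<ge> 2" using x2 e1 power_increasing[of 1 e "2::real"] by simp
      then have "x + cmod w \<le> x * cmod w" using sum_le_prod cw by blast
      then show "(x + cmod w) / 2 \<le> (x * cmod w) / 2" by simp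
    qed
    finally show ?thesis unfolding C_def cz .
  qed
qed



lemma gprime_1i: "gprime (1 + \<i>)"
proof -
  have g: "gauss_int (1 + \<i>)" by (simp add: gauss_int_def)
  have n2: "gn (1 + \<i>) = 2"
  proof -
    have "real (gn (1 + \<i>)) = 2" using gn_real[OF g] by (simp add: cmod_power2)
    then show ?thesis by linarith
  qed
  show ?thesis unfolding gprime_def
  proof (intro conjI allI impI)
    show "gauss_int (1 + \<i>)" by (rule g)
    show "1 < gn (1 + \<i>)" using n2 by simp
    fix a b assume a: "gauss_int a" and b: "gauss_int b" and e: "1 + \<i> = a * b"
    have ab: "gn a * gn b = 2" using gn_mult[OF a b] e n2 by simp
    show "gunit a \<or> gunit b"
    proof (rule ccontr)
      assume "\<not> (gunit a \<or> gunit b)"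
      then have "gn a \<noteq> 1" "gn b \<noteq> 1" using gunit_iff a b by auto
      moreover have "gn a \<noteq> 0" "gn b \<noteq> 0" using ab by (metis mult_is_0 zero_neq_numeral)+
      ultimately have "gn a \<ge> 2" "gn b \<ge> 2" by auto
      then have "gn a * gn b \<ge> 2 * 2" by (intro mult_mono) auto
      then show False using ab by simp
    qed
  qed
qed

lemma sq_1i: "(1 + \<i>) ^ 2 = 2 * \<i>"
  by (simp add: power2_eq_square algebra_simps)

lemma gt_split:
  assumes m: "odd m"
  shows "gt k (2 ^ a * m) = card (Comp k (2 * a)) * cnt k (of_nat m)"
proof -
  define w where "w = (-\<i>) ^ a * of_nat m"
  have uw: "gunit ((-\<i>) ^ a)" by (rule gunit_power[OF gunit_mi])
  have gw: "gauss_int w" unfolding w_def using gunit_gauss[OF uw] by (simp add: gauss_mult)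
  have "gn w = gn ((-\<i>) ^ a) * gn (of_nat m)" unfolding w_def
    using gn_mult gunit_gauss[OF uw] by simp
  then have gnw: "gn w = m ^ 2" using gn_gunit[OF uw] gn_of_nat by simp
  have wnz: "w \<noteq> 0" using gnw m gn_0_iff[OF gw] by (cases m) auto
  have nd: "\<not> gdvd (1 + \<i>) w"
  proof
    assume "gdvd (1 + \<i>) w"
    then obtain c where c: "gauss_int c" "w = (1 + \<i>) * c" unfolding gdvd_def by blast
    have "gn w = gn (1 + \<i>) * gn c" using c gn_mult[of "1 + \<i>" c] by (simp add: gauss_int_def)
    moreover have "gn (1 + \<i>) = 2" using gprime_1i unfolding gprime_def
    proof -
      have "real (gn (1 + \<i>)) = 2" using gn_real[of "1 + \<i>"] by (simp add: cmod_power2 gauss_int_def)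
      then show ?thesis by linarith
    qed
    ultimately have "even (gn w)" by simp
    then show False using gnw m by simp
  qed
  have eq: "(of_nat (2 ^ a * m) :: complex) = (1 + \<i>) ^ (2 * a) * w"
  proof -
    have "(1 + \<i>) ^ (2 * a) * w = ((1 + \<i>) ^ 2) ^ a * (-\<i>) ^ a * of_nat m"
      unfolding w_def by (simp add: power_mult mult.assoc)
    also have "\<dots> = (2 * \<i>) ^ a * (-\<i>) ^ a * of_nat m" unfolding sq_1i ..
    also have "\<dots> = (2 * \<i> * (-\<i>)) ^ a * of_nat m" by (simp only: power_mult_distrib)
    also have "\<dots> = 2 ^ a * of_nat m"
    proof -
      have "2 * \<i> * (-\<i>) = (2::complex)" by (simp add: complex_eq_iff)
      then show ?thesis by simp
    qed
    finally show ?thesis by simp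
  qed
  have "gt k (2 ^ a * m) = cnt k ((1 + \<i>) ^ (2 * a) * w)" unfolding gt_cnt eq ..
  also have "\<dots> = card (Comp k (2 * a)) * cnt k w" by (rule split_cnt[OF gprime_1i gw wnz nd])
  also have "cnt k w = cnt k (of_nat m)"
    using cnt_cong[of "of_nat m" w k] gassoc_unitI[OF uw, of "of_nat m"] unfolding w_def by (metis gassoc_sym)
  finally show ?thesis .
qed

lemma pow2_odd: "(n::nat) \<ge> 1 \<Longrightarrow> \<exists>a m. n = 2 ^ a * m \<and> odd m"
proof (induction n rule: less_induct)
  case (less n)
  show ?case
  proof (cases "odd n")
    case True then show ?thesis by (intro exI[of _ 0] exI[of _ n]) simp
  next
    case False
    then obtain n' where n': "n = 2 * n'" by blast
    then have "n' \<ge> 1" "n' < n" using less.prems by auto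
    then obtain a m where "n' = 2 ^ a * m" "odd m" using less.IH by blast
    then show ?thesis using n' by (intro exI[of _ "Suc a"] exI[of _ m]) simp
  qed
qed

lemma upper:
  assumes k: "k \<ge> 2" and n: "n \<ge> 1"
  shows "real (gt k n) \<le> real ((k + 1) choose 2) powr (real n / 2)"
proof -
  define C where "C = real ((k + 1) choose 2)"
  have Ck: "real k \<le> C" unfolding C_def using C_ge_k[of k] by simp
  then have C1: "1 \<le> C" using k by simp
  have C0: "0 < C" using C1 by simp
  obtain a m where am: "n = 2 ^ a * m" "odd m" using pow2_odd[OF n] by blast
  have m1: "m \<ge> 1" using am(2) by (cases m) auto
  have gtn: "gt k n = card (Comp k (2 * a)) * cnt k (of_nat m)" unfolding am(1) by (rule gt_split[OF am(2)])
  have comp: "real (card (Comp k (2 * a))) \<le> C powr (2 ^ a / 2)"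
  proof (cases "a = 0")
    case True
    have "card (Comp k 0) = 1" unfolding card_Comp by simp
    moreover have "C powr 0 \<le> C powr (1 / 2)" by (rule powr_mono[OF _ C1]) simp
    ultimately show ?thesis using True C0 by simp
  next
    case False
    then have "card (Comp k (2 * a)) \<le> ((k + 1) choose 2) ^ (2 ^ (a - 1))"
      using comp_two_pow k by simp
    then have "real (card (Comp k (2 * a))) \<le> C ^ (2 ^ (a - 1))" unfolding C_def
      by (metis of_nat_le_iff of_nat_power)
    also have "\<dots> = C powr (real (2 ^ (a - 1)))" by (rule powr_realpow[symmetric, OF C0])
    also have "real (2 ^ (a - 1)) = 2 ^ a / 2" using False by (cases a) auto
    finally show ?thesis .
  qed
  show ?thesis
  proof (cases "m = 1")
    case True
    then have "cnt k (of_nat m) = 1" using cnt_unit k by simp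
    then show ?thesis using gtn comp am True unfolding C_def by simp
  next
    case False
    then have m2: "m \<ge> 2" using m1 by simp
    have "m * m \<ge> 2 * 2" by (rule mult_le_mono[OF m2 m2])
    then have "1 < m * m" by linarith
    then have cm: "real (cnt k (of_nat m)) \<le> C powr (real m / 2)"
      using odd_bound[OF k, of "of_nat m"] am(2) m2 gn_of_nat[of m] unfolding C_def
      by (simp add: power2_eq_square)
    show ?thesis
    proof (cases "a = 0")
      case True
      then have "gt k n = cnt k (of_nat m)" using gtn unfolding card_Comp by simp
      moreover have "n = m" using am(1) True by simp
      ultimately show ?thesis using cm unfolding C_def by simp
    next
      case a0: False
    have "real (gt k n) = real (card (Comp k (2 * a))) * real (cnt k (of_nat m))" using gtn by simp
    also have "\<dots> \<le> C powr (2 ^ a / 2) * C powr (real m / 2)" using comp cm by (intro mult_mono) auto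
    also have "\<dots> = C powr ((2 ^ a + real m) / 2)" by (simp add: powr_add[symmetric] add_divide_distrib)
    also have "\<dots> \<le> C powr ((2 ^ a * real m) / 2)"
    proof (rule powr_mono[OF _ C1])
      have "(2::real) ^ a \<ge> 2 ^ 1" using a0 by (intro power_increasing) auto
      then have "(2::real) ^ a \<ge> 2" by simp
      moreover have "real m \<ge> 2" using m2 by simp
      ultimately have "2 ^ a + real m \<le> 2 ^ a * real m" using sum_le_prod by blast
      then show "(2 ^ a + real m) / 2 \<le> (2 ^ a * real m) / 2" by simp
    qed
    also have "2 ^ a * real m = real n" using am(1) by simp
    finally show ?thesis unfolding C_def .
    qed
  qed
qed



theorem lemma4:
  fixes k :: nat
  assumes "k \<ge> 2"
  shows "(\<forall>n::nat. n \<ge> 1 \<longrightarrow> ln (real (gt k n)) / real n \<le> ln (real ((k + 1) choose 2)) / 2)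
       \<and> (\<exists>n::nat. n \<ge> 1 \<and> ln (real (gt k n)) / real n = ln (real ((k + 1) choose 2)) / 2)"
proof
  define C where "C = real ((k + 1) choose 2)"
  have Ck: "real k \<le> C" unfolding C_def using C_ge_k[of k] by simp
  then have C1: "1 \<le> C" using assms by simp
  have C0: "0 < C" using C1 by simp
  have lnC: "0 \<le> ln C" using C1 by simp
  show "\<forall>n::nat. n \<ge> 1 \<longrightarrow> ln (real (gt k n)) / real n \<le> ln (real ((k + 1) choose 2)) / 2"
  proof (intro allI impI)
    fix n :: nat assume n: "n \<ge> 1"
    have ub: "real (gt k n) \<le> C powr (real n / 2)" unfolding C_def by (rule upper[OF assms n])
    show "ln (real (gt k n)) / real n \<le> ln (real ((k + 1) choose 2)) / 2"
    proof (cases "gt k n = 0")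
      case True then show ?thesis using lnC unfolding C_def by simp
    next
      case False
      then have "0 < real (gt k n)" by simp
      then have "ln (real (gt k n)) \<le> ln (C powr (real n / 2))"
        using ub by (subst ln_le_cancel_iff) auto
      also have "\<dots> = real n / 2 * ln C" using C0 by (simp add: ln_powr)
      finally have "ln (real (gt k n)) \<le> real n * (ln C / 2)" by simp
      then show ?thesis using n unfolding C_def by (simp add: divide_le_eq mult.commute)
    qed
  qed
  have "gt k 2 = card (Comp k 2) * cnt k (of_nat 1)" using gt_split[of 1 k 1] by simp
  also have "cnt k (of_nat 1) = 1" using cnt_unit[of 1 k] assms by simp
  also have "card (Comp k 2) = (k + 1) choose 2" unfolding card_Comp using assms by simp
  finally have g2: "gt k 2 = (k + 1) choose 2" by simp
  show "\<exists>n::nat. n \<ge> 1 \<and> ln (real (gt k n)) / real n = ln (real ((k + 1) choose 2)) / 2"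
    by (rule exI[of _ 2]) (simp add: g2)
qed



end
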